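(* Let $k\ge1$ be an integer and $p\in[1,\infty)$. There exist constants $C_0,\dots,C_k>0$ and $E_0,\dots,E_{k-1}>0$, depending only on $p$ and $k$, such that the following holds. Let $A_0,\dots,A_k$ be entire functions and consider $$f^{(k)}+A_{k-1}f^{(k-1)}+\cdots+A_{1}f'+A_{0}f=A_{k}.$$ If $$\sum_{i=0}^{k}C_i\left(\sum_{j=0}^{k-1}\sup_{z\in\mathbb{C}}\left\{\frac{|A_j(z)|}{(1+|z|)^{k-i-j}}\right\}E_j\right)<1$$ and some $k$th order primitive $\varphi_k$ of $A_k$ (i.e. $\varphi_k^{(k)}=A_k$) belongs to $F^{p,k}$, then every solution $f$ of the equation belongs to $F^{p,k}$.
   Context: $dm$ denotes Lebesgue area measure on $\mathbb{C}$. For $p\in[1,\infty)$, $F^p$ is the space of entire $f$ with $\|f\|_p^p=\int_{\mathbb{C}}|f(z)e^{-\frac12|z|^2}|^p\,dm(z)<\infty$. For a positive integer $m$, the Fock–Sobolev space $F^{p,m}$ consists of entire functions $f$ with $\|f\|_{F^{p,m}}=\sum_{\alpha=0}^{m}\|f^{(\alpha)}\|_p<\infty$. *)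

theory Defs
  imports "HOL-Analysis.Analysis"
begin

definition in_fock :: "real \<Rightarrow> (complex \<Rightarrow> complex) \<Rightarrow> bool" where
  "in_fock p f \<longleftrightarrow> f holomorphic_on UNIV \<and>
     nn_integral (lborel :: complex measure) (\<lambda>z. ennreal (norm (f z * complex_of_real (exp (- ((norm z) ^ 2) / 2))) powr p)) < \<infinity>"

definition in_fock_sobolev :: "real \<Rightarrow> nat \<Rightarrow> (complex \<Rightarrow> complex) \<Rightarrow> bool" where
  "in_fock_sobolev p m f \<longleftrightarrow> f holomorphic_on UNIV \<and>
     (\<forall>\<alpha>\<le>m. in_fock p ((deriv ^^ \<alpha>) f))"

end

theory Submission
  imports Defs "HOL-Complex_Analysis.Complex_Analysis" "HOL-Probability.Probability"
    "HOL-Computational_Algebra.Fundamental_Theorem_Algebra" "HOL-Real_Asymp.Real_Asymp"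
begin

definition fw :: "complex \<Rightarrow> real" where "fw z = exp (- ((norm z) ^ 2) / 2)"

lemma fw_pos[simp]: "fw z > 0" by (simp add: fw_def)

definition fint :: "real \<Rightarrow> (complex \<Rightarrow> complex) \<Rightarrow> ennreal" where
  "fint p f = (\<integral>\<^sup>+ z. ennreal ((norm (f z) * fw z) powr p) \<partial>lborel)"

lemma in_fock_iff: "in_fock p f \<longleftrightarrow> f holomorphic_on UNIV \<and> fint p f < \<infinity>"
  unfolding in_fock_def fint_def fw_def
  by (simp add: norm_mult)

lemma fw_nonneg[simp]: "fw z \<ge> 0" using fw_pos[of z] by linarith

lemma fw_meas[measurable]: "fw \<in> borel_measurable borel"
  unfolding fw_def by measurable

lemma meas_fock:
  assumes "continuous_on UNIV f"
  shows "(\<lambda>z. ennreal ((norm (f z) * fw z) powr p)) \<in> borel_measurable borel"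
proof -
  have [measurable]: "f \<in> borel_measurable borel" using assms borel_measurable_continuous_onI by blast
  show ?thesis by measurable
qed

lemma meas_fock_real:
  assumes "continuous_on UNIV f"
  shows "(\<lambda>z. (norm (f z) * fw z) powr p) \<in> borel_measurable borel"
proof -
  have [measurable]: "f \<in> borel_measurable borel" using assms borel_measurable_continuous_onI by blast
  show ?thesis by measurable
qed

lemma powr_add_le:
  fixes a b p :: real assumes "a \<ge> 0" "b \<ge> 0" "p \<ge> 0"
  shows "(a + b) powr p \<le> 2 powr p * (a powr p + b powr p)"
proof -
  have "(a + b) powr p \<le> (2 * max a b) powr p"
    using assms by (intro powr_mono2) auto
  also have "\<dots> = 2 powr p * max a b powr p"
    using assms by (simp add: powr_mult)
  also have "max a b powr p \<le> a powr p + b powr p"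
    by (cases "a \<le> b") (auto simp: max_def)
  hence "2 powr p * max a b powr p \<le> 2 powr p * (a powr p + b powr p)"
    by (intro mult_left_mono) auto
  finally show ?thesis .
qed

lemma in_fock_add:
  assumes p: "p \<ge> 1" and f: "in_fock p f" and g: "in_fock p g"
  shows "in_fock p (\<lambda>z. f z + g z)"
proof -
  have hf: "f holomorphic_on UNIV" and hg: "g holomorphic_on UNIV"
    using f g by (auto simp: in_fock_iff)
  have cf: "continuous_on UNIV f" and cg: "continuous_on UNIV g"
    using hf hg holomorphic_on_imp_continuous_on by blast+
  have "fint p (\<lambda>z. f z + g z) \<le> (\<integral>\<^sup>+ z. ennreal (2 powr p) * (ennreal ((norm (f z) * fw z) powr p) + ennreal ((norm (g z) * fw z) powr p)) \<partial>lborel)"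
    unfolding fint_def
  proof (intro nn_integral_mono)
    fix z
    have "(norm (f z + g z) * fw z) powr p \<le> (norm (f z) * fw z + norm (g z) * fw z) powr p"
      using p by (intro powr_mono2) (auto simp: distrib_right[symmetric] norm_triangle_ineq)
    also have "\<dots> \<le> 2 powr p * ((norm (f z) * fw z) powr p + (norm (g z) * fw z) powr p)"
      using p by (intro powr_add_le) auto
    finally show "ennreal ((norm (f z + g z) * fw z) powr p) \<le> ennreal (2 powr p) * (ennreal ((norm (f z) * fw z) powr p) + ennreal ((norm (g z) * fw z) powr p))"
      by (simp add: ennreal_mult'[symmetric] ennreal_plus[symmetric] del: ennreal_plus)
  qed
  also have "\<dots> = ennreal (2 powr p) * (fint p f + fint p g)"
  proof -
    have mf: "(\<lambda>z. ennreal ((norm (f z) * fw z) powr p)) \<in> borel_measurable lborel"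
      using meas_fock[OF cf] by simp
    have mg: "(\<lambda>z. ennreal ((norm (g z) * fw z) powr p)) \<in> borel_measurable lborel"
      using meas_fock[OF cg] by simp
    show ?thesis unfolding fint_def
      by (subst nn_integral_cmult) (auto intro!: meas_fock cf cg borel_measurable_add simp: nn_integral_add[OF mf mg])
  qed
  also have "\<dots> < \<infinity>"
    using f g by (auto simp: in_fock_iff ennreal_mult_less_top)
  finally show ?thesis
    using hf hg by (auto simp: in_fock_iff intro!: holomorphic_intros)
qed

lemma in_fock_cmult:
  assumes f: "in_fock p f" and p: "p \<ge> 0"
  shows "in_fock p (\<lambda>z. c * f z)"
proof -
  have hf: "f holomorphic_on UNIV" using f by (auto simp: in_fock_iff)
  have cf: "continuous_on UNIV f" using hf holomorphic_on_imp_continuous_on by blast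
  have "fint p (\<lambda>z. c * f z) = (\<integral>\<^sup>+ z. ennreal (norm c powr p) * ennreal ((norm (f z) * fw z) powr p) \<partial>lborel)"
    unfolding fint_def
    by (intro nn_integral_cong) (simp add: norm_mult ennreal_mult'[symmetric] powr_mult[symmetric] mult.assoc)
  also have "\<dots> = ennreal (norm c powr p) * fint p f"
    unfolding fint_def by (subst nn_integral_cmult) (auto intro!: meas_fock_real cf)
  also have "\<dots> < \<infinity>" using f by (auto simp: in_fock_iff ennreal_mult_less_top)
  finally show ?thesis using hf by (auto simp: in_fock_iff intro!: holomorphic_intros)
qed

lemma nn_integral_translate:
  fixes F :: "complex \<Rightarrow> ennreal"
  assumes [measurable]: "F \<in> borel_measurable borel"
  shows "(\<integral>\<^sup>+ z. F (z - a) \<partial>lborel) = (\<integral>\<^sup>+ z. F z \<partial>lborel)"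
proof -
  have "(\<integral>\<^sup>+ z. F z \<partial>lborel) = (\<integral>\<^sup>+ z. F z \<partial>(distr lborel borel ((+) (-a))))"
    by (simp add: lborel_distr_plus)
  also have "\<dots> = (\<integral>\<^sup>+ z. F (-a + z) \<partial>lborel)"
    by (subst nn_integral_distr) auto
  finally show ?thesis by simp
qed

lemma fw_translate:
  "norm (exp (cnj a * z)) * fw z = exp ((norm a)^2/2) * fw (z - a)"
proof -
  have "Re (cnj a * z) - (norm z)^2/2 = (norm a)^2/2 - (norm (z - a))^2/2"
    unfolding cmod_power2 by (simp add: power2_eq_square field_simps)
  hence "exp (Re (cnj a * z)) * exp (- ((norm z) ^ 2) / 2) = exp ((norm a)^2/2) * exp (- ((norm (z-a)) ^ 2) / 2)"
    by (simp add: exp_add[symmetric])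
  thus ?thesis by (simp add: fw_def norm_exp)
qed

lemma fint_translate:
  assumes "continuous_on UNIV g" "p \<ge> 0"
  shows "fint p (\<lambda>z. g (z - a) * exp (cnj a * z)) = ennreal (exp ((norm a)^2/2) powr p) * fint p g"
proof -
  have "fint p (\<lambda>z. g (z - a) * exp (cnj a * z)) =
     (\<integral>\<^sup>+ z. ennreal (exp ((norm a)^2/2) powr p) * ennreal ((norm (g (z - a)) * fw (z - a)) powr p) \<partial>lborel)"
    unfolding fint_def
  proof (intro nn_integral_cong)
    fix z
    have "norm (g (z - a) * exp (cnj a * z)) * fw z = exp ((norm a)^2/2) * (norm (g (z - a)) * fw (z - a))"
      using fw_translate[of a z] by (simp add: norm_mult mult_ac)
    thus "ennreal ((norm (g (z - a) * exp (cnj a * z)) * fw z) powr p) = ennreal (exp ((norm a)^2/2) powr p) * ennreal ((norm (g (z - a)) * fw (z - a)) powr p)"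
      by (simp add: powr_mult ennreal_mult'[symmetric])
  qed
  also have "\<dots> = ennreal (exp ((norm a)^2/2) powr p) * (\<integral>\<^sup>+ z. ennreal ((norm (g (z - a)) * fw (z - a)) powr p) \<partial>lborel)"
    using meas_fock[OF assms(1)] by (subst nn_integral_cmult) (auto intro!: measurable_compose[OF _ meas_fock[OF assms(1)]])
  also have "(\<integral>\<^sup>+ z. ennreal ((norm (g (z - a)) * fw (z - a)) powr p) \<partial>lborel) = fint p g"
    unfolding fint_def using nn_integral_translate[OF meas_fock[OF assms(1), of p], of a] by simp
  finally show ?thesis .
qed

lemma in_fock_translate_iff:
  assumes "g holomorphic_on UNIV" "p \<ge> 0"
  shows "in_fock p (\<lambda>z. g (z - a) * exp (cnj a * z)) \<longleftrightarrow> in_fock p g"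
proof -
  have c: "continuous_on UNIV g" using assms holomorphic_on_imp_continuous_on by blast
  have h: "(\<lambda>z. g (z - a) * exp (cnj a * z)) holomorphic_on UNIV"
    using assms(1) by (intro holomorphic_intros holomorphic_on_compose_gen[where g=g and f="\<lambda>z. z - a" and t=UNIV, unfolded o_def]) auto
  show ?thesis using h assms
    by (auto simp: in_fock_iff fint_translate[OF c assms(2)] ennreal_mult_less_top)
qed

lemma powr_tangent:
  fixes y m p :: real
  assumes "y \<ge> 0" "m \<ge> 0" "p \<ge> 1"
  shows "m powr p + p * m powr (p - 1) * (y - m) \<le> y powr p"
proof (cases "m = 0")
  case True thus ?thesis using assms by simp
next
  case m: False
  hence m0: "m > 0" using assms by simp
  show ?thesis
  proof (cases "y = 0")
    case True
    have "m powr p = m * m powr (p - 1)"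
      using m0 by (simp add: powr_mult_base)
    hence "m powr p + p * m powr (p - 1) * (y - m) = (1 - p) * m powr p"
      using True by (simp add: algebra_simps)
    also have "\<dots> \<le> 0" using assms by (simp add: mult_nonpos_nonneg)
    finally show ?thesis using True by simp
  next
    case False
    hence y0: "y > 0" using assms by simp
    have d: "((\<lambda>x. x powr p) has_field_derivative p * m powr (p - 1)) (at m within {0<..})"
      using m0 by (auto intro!: derivative_eq_intros)
    have "y powr p - m powr p \<ge> p * m powr (p - 1) * (y - m)"
      by (rule convex_on_imp_above_tangent[OF powr_convex[OF assms(3)] _ _ _ d])
         (use m0 y0 in \<open>auto simp: interior_open\<close>)
    thus ?thesis by simp
  qed
qed

lemma jensen_interval:
  fixes f \<rho> :: "real \<Rightarrow> real" and a b p :: real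
  assumes p: "p \<ge> 1" and cf: "continuous_on {a..b} f" and cr: "continuous_on {a..b} \<rho>"
    and f0: "\<And>t. t \<in> {a..b} \<Longrightarrow> f t \<ge> 0" and r0: "\<And>t. t \<in> {a..b} \<Longrightarrow> \<rho> t > 0"
    and N0: "integral {a..b} \<rho> > 0"
  shows "(integral {a..b} f) powr p \<le> (integral {a..b} \<rho>) powr (p - 1) * integral {a..b} (\<lambda>t. f t powr p * \<rho> t powr (1 - p))"
proof -
  define N where "N = integral {a..b} \<rho>"
  define F where "F = integral {a..b} f"
  define m where "m = F / N"
  have N: "N > 0" using N0 by (simp add: N_def)
  have F0: "F \<ge> 0" unfolding F_def using f0 by (intro integral_nonneg) (auto intro: integrable_continuous_interval cf)
  have m0: "m \<ge> 0" using N F0 by (simp add: m_def)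
  have intf: "f integrable_on {a..b}" using cf by (rule integrable_continuous_interval)
  have intr: "\<rho> integrable_on {a..b}" using cr by (rule integrable_continuous_interval)
  have cg: "continuous_on {a..b} (\<lambda>t. f t powr p * \<rho> t powr (1 - p))"
    using p f0 r0 by (intro continuous_on_mult continuous_on_powr' cf cr continuous_on_const) (auto simp: less_imp_le, metis less_irrefl)
  have intg: "(\<lambda>t. f t powr p * \<rho> t powr (1 - p)) integrable_on {a..b}"
    using cg by (rule integrable_continuous_interval)
  have pt: "m powr p * \<rho> t + p * m powr (p - 1) * (f t - m * \<rho> t) \<le> f t powr p * \<rho> t powr (1 - p)"
    if t: "t \<in> {a..b}" for t
  proof -
    have rt: "\<rho> t > 0" using r0 t by simp
    have ft: "f t \<ge> 0" using f0 t by simp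
    have "m powr p + p * m powr (p - 1) * (f t / \<rho> t - m) \<le> (f t / \<rho> t) powr p"
      using rt ft m0 p by (intro powr_tangent) auto
    hence "(m powr p + p * m powr (p - 1) * (f t / \<rho> t - m)) * \<rho> t \<le> (f t / \<rho> t) powr p * \<rho> t"
      using rt by (intro mult_right_mono) auto
    also have "(f t / \<rho> t) powr p * \<rho> t = f t powr p * \<rho> t powr (1 - p)"
      using rt ft by (simp add: powr_divide powr_diff field_simps)
    also have "(m powr p + p * m powr (p - 1) * (f t / \<rho> t - m)) * \<rho> t =
        m powr p * \<rho> t + p * m powr (p - 1) * (f t - m * \<rho> t)"
      using rt by (simp add: field_simps)
    finally show ?thesis .
  qed
  have "integral {a..b} (\<lambda>t. m powr p * \<rho> t + p * m powr (p - 1) * (f t - m * \<rho> t))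
        = m powr p * N + p * m powr (p - 1) * (F - m * N)"
    unfolding N_def F_def
    by (intro integral_unique has_integral_add has_integral_mult_right has_integral_diff integrable_integral intf intr)
  also have "F - m * N = 0" using N by (simp add: m_def)
  finally have eq: "integral {a..b} (\<lambda>t. m powr p * \<rho> t + p * m powr (p - 1) * (f t - m * \<rho> t)) = m powr p * N"
    by simp
  have le: "m powr p * N \<le> integral {a..b} (\<lambda>t. f t powr p * \<rho> t powr (1 - p))"
  proof -
    have intl: "(\<lambda>t. m powr p * \<rho> t + p * m powr (p - 1) * (f t - m * \<rho> t)) integrable_on {a..b}"
      by (intro integrable_continuous_interval continuous_intros cf cr)
    show ?thesis unfolding eq[symmetric] by (rule integral_le[OF intl intg]) (use pt in auto)
  qed
  have "F powr p = N powr (p - 1) * (m powr p * N)"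
  proof -
    have "F = m * N" using N by (simp add: m_def)
    hence "F powr p = m powr p * N powr p" using m0 N by (simp add: powr_mult)
    also have "N powr p = N powr (p - 1) * N" using N by (simp add: powr_diff)
    finally show ?thesis by simp
  qed
  also have "\<dots> \<le> N powr (p - 1) * integral {a..b} (\<lambda>t. f t powr p * \<rho> t powr (1 - p))"
    using le N by (intro mult_left_mono) auto
  finally show ?thesis by (simp add: N_def F_def)
qed

lemma gauss_real_finite:
  "(\<integral>\<^sup>+ x. ennreal (exp (- (x::real)\<^sup>2 / 2)) \<partial>lborel) < \<infinity>"
proof -
  have "(\<integral>\<^sup>+ x. ennreal (exp (- (x::real)\<^sup>2 / 2)) \<partial>lborel) = (\<integral>\<^sup>+ x. ennreal (sqrt (2*pi) * std_normal_density x) \<partial>lborel)"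
    by (intro nn_integral_cong) (simp add: std_normal_density_def)
  also have "\<dots> = ennreal (sqrt (2*pi)) * (\<integral>\<^sup>+ x. ennreal (std_normal_density x) \<partial>lborel)"
    by (subst nn_integral_cmult[symmetric]) (auto simp: ennreal_mult)
  also have "(\<integral>\<^sup>+ x. ennreal (std_normal_density x) \<partial>lborel) = ennreal 1"
    by (subst nn_integral_eq_integral) auto
  finally show ?thesis by (simp add: ennreal_mult_less_top)
qed

lemma gauss_complex_finite:
  "(\<integral>\<^sup>+ z. ennreal (exp (- (norm (z::complex))\<^sup>2 / 2)) \<partial>lborel) < \<infinity>"
proof -
  have "(\<integral>\<^sup>+ z. ennreal (exp (- (norm (z::complex))\<^sup>2 / 2)) \<partial>lborel) =
        (\<integral>\<^sup>+ (z::complex). (\<Prod>b\<in>Basis. (\<lambda>b x. ennreal (exp (- x\<^sup>2 / 2))) b (z \<bullet> b)) \<partial>lborel)"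
  proof (intro nn_integral_cong)
    fix z :: complex
    have "exp (- (norm z)\<^sup>2 / 2) = exp (- (Re z)\<^sup>2 / 2) * exp (- (Im z)\<^sup>2 / 2)"
      by (simp add: cmod_power2 exp_add[symmetric] add_divide_distrib)
    thus "ennreal (exp (- (norm z)\<^sup>2 / 2)) = (\<Prod>b\<in>Basis. (\<lambda>b x. ennreal (exp (- x\<^sup>2 / 2))) b (z \<bullet> b))"
      by (simp add: Basis_complex_def inner_complex_def ennreal_mult)
  qed
  also have "\<dots> = (\<Prod>b\<in>(Basis::complex set). (\<integral>\<^sup>+ x. ennreal (exp (- x\<^sup>2 / 2)) \<partial>lborel))"
    by (rule nn_integral_lborel_prod) auto
  also have "\<dots> < \<infinity>"
    using gauss_real_finite by (simp add: Basis_complex_def ennreal_mult_less_top)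
  finally show ?thesis .
qed

lemma kint:
  fixes u :: real assumes u: "u > 0"
  shows "(\<integral>\<^sup>+ t. ennreal (indicator {0..1} t * (1 / t^3 * exp (- (1 / t^2 - 1) * u^2 / 2))) \<partial>lborel) = ennreal (1 / u^2)"
proof -
  define F where "F t = (if t = 0 then 0 else exp (- (1 / t^2 - 1) * u^2 / 2) / u^2)" for t :: real
  have lim: "((\<lambda>t::real. exp (- (1 / t^2 - 1) * u^2 / 2) / u^2) \<longlongrightarrow> 0) (at_right 0)"
    using u by real_asymp
  have cont: "continuous_on {0..1} F"
  proof (clarsimp simp: continuous_on_eq_continuous_within)
    fix x :: real assume x: "0 \<le> x" "x \<le> 1"
    show "continuous (at x within {0..1}) F"
    proof (cases "x = 0")
      case True
      have "(F \<longlongrightarrow> F 0) (at_right 0)"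
      proof -
        have ev: "\<forall>\<^sub>F t in at_right 0. exp (- (1 / t^2 - 1) * u^2 / 2) / u^2 = F t"
          unfolding eventually_at_filter by (rule always_eventually) (auto simp: F_def)
        moreover have "F 0 = 0" by (simp add: F_def)
        thus ?thesis using tendsto_cong[OF ev] lim by simp
      qed
      thus ?thesis using True by (simp add: continuous_within at_within_Icc_at_right)
    next
      case False
      hence "x > 0" using x by simp
      have "continuous (at x) (\<lambda>t. exp (- (1 / t^2 - 1) * u^2 / 2) / u^2)"
        using \<open>x > 0\<close> u by (intro continuous_intros) auto
      moreover have ev2: "\<forall>\<^sub>F t in nhds x. exp (- (1 / t^2 - 1) * u^2 / 2) / u^2 = F t"
        using eventually_nhds_in_open[of "{0<..}" x, OF _ ] \<open>x > 0\<close>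
        by (intro eventually_mono[OF eventually_nhds_in_open[of "{0<..}" x]]) (auto simp: F_def)
      ultimately have "continuous (at x) F"
        using isCont_cong[OF ev2] by blast
      thus ?thesis by (rule continuous_at_imp_continuous_within)
    qed
  qed
  have der: "(F has_vector_derivative (1 / t^3 * exp (- (1 / t^2 - 1) * u^2 / 2))) (at t)"
    if t: "t \<in> {0<..<1}" for t :: real
  proof -
    have t0: "t > 0" using t by simp
    have "((\<lambda>t. exp (- (1 / t^2 - 1) * u^2 / 2) / u^2) has_real_derivative (1 / t^3 * exp (- (1 / t^2 - 1) * u^2 / 2))) (at t)"
      using t0 u by (auto intro!: derivative_eq_intros simp: field_simps power2_eq_square power3_eq_cube)
    hence "(F has_real_derivative (1 / t^3 * exp (- (1 / t^2 - 1) * u^2 / 2))) (at t)"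
      by (rule has_field_derivative_transform_within_open[where S="{0<..}"]) (use t0 in \<open>auto simp: F_def\<close>)
    thus ?thesis by (simp add: has_real_derivative_iff_has_vector_derivative)
  qed
  have "((\<lambda>t. 1 / t^3 * exp (- (1 / t^2 - 1) * u^2 / 2)) has_integral (F 1 - F 0)) {0..1}"
    by (rule fundamental_theorem_of_calculus_interior[OF _ cont der]) auto
  hence hi: "((\<lambda>t. 1 / t^3 * exp (- (1 / t^2 - 1) * u^2 / 2)) has_integral (1 / u^2)) {0..1}"
    by (simp add: F_def)
  have "(\<integral>\<^sup>+ t. ennreal (indicator {0..1} t * (1 / t^3 * exp (- (1 / t^2 - 1) * u^2 / 2))) \<partial>lborel) = ennreal (1/u^2)"
    by (rule nn_integral_has_integral_lebesgue[OF _ hi]) auto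
  thus ?thesis .
qed

definition Gf :: "real \<Rightarrow> (complex \<Rightarrow> complex) \<Rightarrow> complex \<Rightarrow> real \<Rightarrow> real" where
  "Gf p \<psi> z t = (norm (\<psi> (of_real t * z)) * fw (of_real t * z)) powr p * t powr (1 - p) *
      norm z powr (2 - p) * exp (- (1 - t^2) * (norm z)^2 / 2)"

lemma ray_ftc:
  assumes holo: "g holomorphic_on UNIV" and ab: "a \<le> b"
  shows "((\<lambda>t. z * deriv g (of_real t * z)) has_integral (g (of_real b * z) - g (of_real a * z))) {a..b}"
proof -
  have "((\<lambda>t. g (of_real t * z)) has_vector_derivative (z * deriv g (of_real x * z))) (at x within {a..b})" for x
  proof -
    have "((\<lambda>w. g (w * z)) has_field_derivative (deriv g (of_real x * z) * z)) (at (of_real x))"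
      using holo by (auto intro!: derivative_eq_intros holomorphic_derivI[of g UNIV, where T=UNIV, simplified]
            DERIV_chain2[where f=g])
    from has_vector_derivative_real_field[OF this] show ?thesis by (simp add: mult.commute)
  qed
  thus ?thesis by (intro fundamental_theorem_of_calculus ab) auto
qed

lemma rho_integral:
  fixes r :: real assumes r: "r > 1"
  shows "((\<lambda>t. t * r^2 * exp (t^2 * r^2 / 2)) has_integral (exp (r^2/2) - exp (1/2))) {1/r..1}"
proof -
  have "((\<lambda>t. t * r^2 * exp (t^2 * r^2 / 2)) has_integral (exp (1^2 * r^2/2) - exp ((1/r)^2 * r^2/2))) {1/r..1}"
  proof (rule fundamental_theorem_of_calculus)
    show "1 / r \<le> 1" using r by simp
    fix x :: real
    have "((\<lambda>t. exp (t^2 * r^2 / 2)) has_real_derivative (x * r^2 * exp (x^2 * r^2 / 2))) (at x within {1/r..1})"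
      by (auto intro!: derivative_eq_intros simp: field_simps power2_eq_square)
    thus "((\<lambda>t. exp (t^2 * r^2 / 2)) has_vector_derivative (x * r^2 * exp (x^2 * r^2 / 2))) (at x within {1/r..1})"
      by (simp add: has_real_derivative_iff_has_vector_derivative)
  qed
  thus ?thesis using r by (simp add: power_divide)
qed

lemma powr_as_exp: "(x::real) > 0 \<Longrightarrow> x powr y = exp (y * ln x)"
  by (auto simp: powr_def)

lemma Gf_identity:
  fixes r t f :: real
  assumes r: "r > 0" and t: "t > 0" and f: "f \<ge> 0"
  shows "r powr p * exp (- (r^2) / 2) * (f powr p * (t * r^2 * exp (t^2 * r^2 / 2)) powr (1 - p))
       = (f * exp (- ((t * r)^2) / 2)) powr p * t powr (1 - p) * r powr (2 - p) * exp (- (1 - t^2) * r^2 / 2)"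
proof -
  have e1: "(f * exp (- ((t * r)^2) / 2)) powr p = f powr p * exp (- p * ((t * r)^2) / 2)"
    using f by (simp add: powr_mult exp_powr_real mult_ac)
  have e2: "(t * r^2 * exp (t^2 * r^2 / 2)) powr (1 - p) = exp ((1 - p) * (ln t + 2 * ln r + t^2 * r^2 / 2))"
    using r t by (simp add: powr_as_exp ln_mult ln_realpow)
  show ?thesis
    unfolding e1 e2 using r t
    by (simp add: powr_as_exp mult_exp_exp) (simp add: field_simps power2_eq_square)
qed

lemma ray_estimate:
  assumes holo: "g holomorphic_on UNIV" and p: "p \<ge> 1"
    and B: "\<And>w. norm w \<le> 1 \<Longrightarrow> norm (g w) \<le> B" and z: "norm z > 1"
  shows "(norm (g z) * fw z) powr p \<le> 2 powr p * ((B * fw z) powr p + integral {1/norm z..1} (Gf p (deriv g) z))"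
proof -
  define r where "r = norm z"
  define \<psi> where "\<psi> = deriv g"
  have r1: "r > 1" using z by (simp add: r_def)
  hence r0: "r > 0" by simp
  have B0: "B \<ge> 0" using B[of 0] norm_ge_zero[of "g 0"] by (simp add: order.trans[OF norm_ge_zero])
  have c\<psi>: "continuous_on UNIV \<psi>"
    unfolding \<psi>_def using holo by (intro holomorphic_on_imp_continuous_on holomorphic_deriv) auto
  define f where "f t = norm (\<psi> (of_real t * z))" for t
  have cf: "continuous_on {1/r..1} f"
    unfolding f_def by (intro continuous_on_norm continuous_on_compose2[OF c\<psi>] continuous_intros) auto
  have f0: "f t \<ge> 0" for t by (simp add: f_def)
  define F where "F = integral {1/r..1} f"
  have F0: "F \<ge> 0" unfolding F_def by (intro integral_nonneg integrable_continuous_interval cf f0)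
  have ftc: "((\<lambda>t. z * \<psi> (of_real t * z)) has_integral (g z - g (of_real (1/r) * z))) {1/r..1}"
    using ray_ftc[OF holo, of "1/r" 1 z] r1 by (simp add: \<psi>_def)
  have "norm (g z - g (of_real (1/r) * z)) = norm (integral {1/r..1} (\<lambda>t. z * \<psi> (of_real t * z)))"
    by (simp only: integral_unique[OF ftc])
  also have "\<dots> \<le> integral {1/r..1} (\<lambda>t. r * f t)"
  proof (rule integral_norm_bound_integral)
    show "(\<lambda>t. z * \<psi> (of_real t * z)) integrable_on {1/r..1}" using ftc by blast
    show "(\<lambda>t. r * f t) integrable_on {1/r..1}"
      by (intro integrable_continuous_interval continuous_intros cf)
  qed (simp add: f_def r_def norm_mult)
  also have "\<dots> = r * F" by (simp add: F_def)
  finally have d: "norm (g z - g (of_real (1/r) * z)) \<le> r * F" .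
  have "norm (of_real (1/r) * z) \<le> 1" using r0 by (simp add: norm_mult r_def norm_divide)
  hence "norm (g (of_real (1/r) * z)) \<le> B" by (rule B)
  hence gz: "norm (g z) \<le> B + r * F" using d norm_triangle_ineq2[of "g z" "g (of_real (1/r) * z)"] by linarith
  define \<rho> where "\<rho> t = t * r^2 * exp (t^2 * r^2 / 2)" for t
  define N where "N = integral {1/r..1} \<rho>"
  have Nval: "N = exp (r^2/2) - exp (1/2)"
    unfolding N_def \<rho>_def using rho_integral[OF r1] by (simp add: integral_unique)
  have N0: "N > 0" unfolding Nval using r1 by (simp add: power_gt1_lemma one_less_power)
  have Nle: "N \<le> exp (r^2/2)" unfolding Nval by simp
  have cr: "continuous_on {1/r..1} \<rho>" unfolding \<rho>_def by (intro continuous_intros) auto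
  have r0': "\<rho> t > 0" if "t \<in> {1/r..1}" for t
  proof -
    have "t > 0" using that r0 by (auto intro: less_le_trans[of 0 "1/r"])
    thus ?thesis using r0 by (simp add: \<rho>_def)
  qed
  define I1 where "I1 = integral {1/r..1} (\<lambda>t. f t powr p * \<rho> t powr (1 - p))"
  have J: "F powr p \<le> N powr (p - 1) * I1"
    unfolding F_def I1_def N_def
    by (rule jensen_interval[OF p cf cr f0 r0']) (use N0 in \<open>simp_all add: N_def\<close>)
  have I10: "I1 \<ge> 0" unfolding I1_def
    by (intro integral_nonneg integrable_continuous_interval)
       (use p in \<open>auto intro!: continuous_on_mult continuous_on_powr' cf cr continuous_on_const simp: f0 less_imp_le dest: r0'\<close>)
  have Np: "N powr (p - 1) \<le> exp (r^2/2 * (p - 1))"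
  proof -
    have "N powr (p - 1) \<le> exp (r^2/2) powr (p - 1)" using N0 Nle p by (intro powr_mono2) auto
    thus ?thesis by (simp add: exp_powr_real)
  qed
  define e where "e = fw z"
  have e0: "e > 0" by (simp add: e_def)
  have ep: "e powr p = exp (- (r^2) / 2 * p)" by (simp add: e_def fw_def r_def exp_powr_real)
  have "(norm (g z) * e) powr p \<le> ((B + r * F) * e) powr p"
    using gz e0 p by (intro powr_mono2 mult_right_mono) auto
  also have "((B + r * F) * e) = B * e + r * F * e" by (simp add: algebra_simps)
  also have "(B * e + r * F * e) powr p \<le> 2 powr p * ((B * e) powr p + (r * F * e) powr p)"
    using B0 F0 r0 e0 p by (intro powr_add_le) auto
  also have "(r * F * e) powr p \<le> r powr p * exp (- (r^2) / 2) * I1"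
  proof -
    have "(r * F * e) powr p = r powr p * F powr p * e powr p" using r0 F0 e0 by (simp add: powr_mult)
    also have "\<dots> \<le> r powr p * (exp (r^2/2 * (p - 1)) * I1) * e powr p"
      using J Np I10 by (intro mult_right_mono mult_left_mono order.trans[OF J] mult_right_mono) auto
    also have "\<dots> = r powr p * I1 * (exp (r^2/2 * (p - 1)) * exp (- (r^2) / 2 * p))"
      unfolding ep by (simp add: mult_ac)
    also have "exp (r^2/2 * (p - 1)) * exp (- (r^2) / 2 * p) = exp (- (r^2) / 2)"
      by (simp add: mult_exp_exp field_simps)
    finally show ?thesis by (simp add: mult_ac)
  qed
  also have "r powr p * exp (- (r^2) / 2) * I1 = integral {1/r..1} (Gf p \<psi> z)"
  proof -
    have "r powr p * exp (- (r^2) / 2) * I1 = integral {1/r..1} (\<lambda>t. r powr p * exp (- (r^2) / 2) * (f t powr p * \<rho> t powr (1 - p)))"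
      by (simp add: I1_def)
    also have "\<dots> = integral {1/r..1} (Gf p \<psi> z)"
    proof (rule integral_cong)
      fix t assume t: "t \<in> {1/r..1}"
      have t0: "t > 0" using t r0 by (auto intro: less_le_trans[of 0 "1/r"])
      have nt: "norm (of_real t * z) = t * r" using t0 by (simp add: norm_mult r_def)
      show "r powr p * exp (- (r^2) / 2) * (f t powr p * \<rho> t powr (1 - p)) = Gf p \<psi> z t"
        unfolding Gf_def fw_def nt \<rho>_def f_def
        using Gf_identity[OF r0 t0, of "norm (\<psi> (of_real t * z))" p] by (simp add: r_def)
    qed
    finally show ?thesis .
  qed
  finally show ?thesis by (simp add: e_def r_def \<psi>_def mult_left_mono)
qed

lemma nn_integral_scale_complex:
  fixes F :: "complex \<Rightarrow> ennreal"
  assumes t: "t > 0" and [measurable]: "F \<in> borel_measurable borel"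
  shows "(\<integral>\<^sup>+ z. F z \<partial>lborel) = (\<integral>\<^sup>+ w. ennreal (1 / t^2) * F (of_real (1/t) * w) \<partial>lborel)"
proof -
  have "(\<integral>\<^sup>+ z. F z \<partial>lborel) = (\<integral>\<^sup>+ z. F z \<partial>(density (distr lborel borel (\<lambda>x. 0 + (1/t) *\<^sub>R x)) (\<lambda>_. \<bar>1/t\<bar>^DIM(complex))))"
    using lborel_affine[of "1/t" "0::complex"] t by simp
  also have "\<dots> = (\<integral>\<^sup>+ z. \<bar>1/t\<bar>^DIM(complex) * F z \<partial>(distr lborel borel (\<lambda>x. 0 + (1/t) *\<^sub>R x)))"
    by (subst nn_integral_density) auto
  also have "\<dots> = (\<integral>\<^sup>+ w. \<bar>1/t\<bar>^DIM(complex) * F (0 + (1/t) *\<^sub>R w) \<partial>lborel)"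
    by (subst nn_integral_distr) auto
  also have "\<dots> = (\<integral>\<^sup>+ w. ennreal (1 / t^2) * F (of_real (1/t) * w) \<partial>lborel)"
    using t by (intro nn_integral_cong) (simp add: scaleR_conv_of_real power_divide ennreal_power)
  finally show ?thesis .
qed

lemma meas_pair_lborel:
  assumes "f \<in> borel_measurable (borel \<Otimes>\<^sub>M borel)"
  shows "f \<in> borel_measurable (lborel \<Otimes>\<^sub>M lborel)"
  using assms measurable_cong_sets[OF sets_pair_measure_cong[OF sets_lborel sets_lborel] refl] by blast

definition Sset :: "(complex \<times> real) set" where
  "Sset = {x. 1 < norm (fst x) \<and> 1 / norm (fst x) \<le> snd x \<and> snd x \<le> 1}"

definition Hf :: "real \<Rightarrow> (complex \<Rightarrow> complex) \<Rightarrow> complex \<Rightarrow> real \<Rightarrow> ennreal" where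
  "Hf p \<psi> z t = ennreal (indicator Sset (z, t) * Gf p \<psi> z t)"

definition K2f :: "real \<Rightarrow> (complex \<Rightarrow> complex) \<Rightarrow> complex \<Rightarrow> real \<Rightarrow> ennreal" where
  "K2f p \<psi> w t = ennreal (indicator {1..} (norm w) * (norm (\<psi> w) * fw w) powr p * norm w powr (2 - p) *
        (indicator {0..1} t * (1 / t^3 * exp (- (1 / t^2 - 1) * (norm w)^2 / 2))))"

lemma meas_H:
  assumes [measurable]: "\<psi> \<in> borel_measurable borel"
  shows "case_prod (Hf p \<psi>) \<in> borel_measurable (lborel \<Otimes>\<^sub>M lborel)"
proof -
  have [measurable]: "Sset \<in> sets (borel \<Otimes>\<^sub>M borel)"
  proof -
    have "Measurable.pred (borel \<Otimes>\<^sub>M borel) (\<lambda>x::complex\<times>real. 1 < norm (fst x) \<and> 1 / norm (fst x) \<le> snd x \<and> snd x \<le> 1)"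
      by measurable
    thus ?thesis by (simp add: Sset_def pred_def space_pair_measure)
  qed
  have "(\<lambda>x. Hf p \<psi> (fst x) (snd x)) \<in> borel_measurable (borel \<Otimes>\<^sub>M borel)"
    unfolding Hf_def Gf_def by measurable
  hence "(\<lambda>x. Hf p \<psi> (fst x) (snd x)) \<in> borel_measurable (lborel \<Otimes>\<^sub>M lborel)"
    by (rule meas_pair_lborel)
  thus ?thesis by (simp add: case_prod_beta')
qed

lemma meas_K2:
  assumes [measurable]: "\<psi> \<in> borel_measurable borel"
  shows "case_prod (K2f p \<psi>) \<in> borel_measurable (lborel \<Otimes>\<^sub>M lborel)"
proof -
  have "(\<lambda>x. K2f p \<psi> (fst x) (snd x)) \<in> borel_measurable (borel \<Otimes>\<^sub>M borel)"
    unfolding K2f_def by measurable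
  hence "(\<lambda>x. K2f p \<psi> (fst x) (snd x)) \<in> borel_measurable (lborel \<Otimes>\<^sub>M lborel)"
    by (rule meas_pair_lborel)
  thus ?thesis by (simp add: case_prod_beta')
qed

lemma scale_identity:
  fixes t u X p :: real
  assumes t: "t > 0" and u: "u > 0"
  shows "(1/t^2) * (X * t powr (1-p) * (u/t) powr (2-p) * exp (- (1 - t^2) * (u/t)^2 / 2))
       = X * u powr (2-p) * (1/t^3 * exp (- (1/t^2 - 1) * u^2 / 2))"
proof -
  define q where "q = u^2/t^2 - u^2"
  have e2: "1/t^2 = exp (- (2 * ln t))" using t
    by (simp add: exp_minus exp_of_nat_mult[where n=2, simplified] inverse_eq_divide)
  have e3: "1/t^3 = exp (- (3 * ln t))" using t
    by (simp add: exp_minus exp_of_nat_mult[where n=3, simplified] inverse_eq_divide)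
  have ex1: "- (1 - t^2) * (u/t)^2 = - q" using t by (simp add: field_simps q_def)
  have ex2: "- (1/t^2 - 1) * u^2 = - q" using t by (simp add: field_simps q_def)
  have "(1/t^2) * (X * t powr (1-p) * (u/t) powr (2-p) * exp (- (1 - t^2) * (u/t)^2 / 2))
      = exp (- (2 * ln t)) * (X * t powr (1-p) * (u/t) powr (2-p) * exp (- q / 2))"
    by (simp only: e2 ex1)
  also have "\<dots> = X * u powr (2-p) * (exp (- (3 * ln t)) * exp (- q / 2))"
    using t u by (simp add: powr_as_exp ln_div mult_exp_exp) (simp add: algebra_simps)
  also have "\<dots> = X * u powr (2-p) * (1/t^3 * exp (- (1/t^2 - 1) * u^2 / 2))"
    by (simp only: e3 ex2)
  finally show ?thesis .
qed

lemma continuous_on_fw: "continuous_on UNIV fw"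
  unfolding fw_def by (intro continuous_intros) auto

lemma Gf_nonneg: "Gf p \<psi> z t \<ge> 0"
  unfolding Gf_def by (intro mult_nonneg_nonneg) auto

lemma Hf_zero: "t \<le> 0 \<or> t > 1 \<Longrightarrow> Hf p \<psi> z t = 0"
proof -
  assume t: "t \<le> 0 \<or> t > 1"
  have "(z, t) \<notin> Sset"
  proof
    assume "(z, t) \<in> Sset"
    hence "1 < norm z" "1 / norm z \<le> t" "t \<le> 1" by (auto simp: Sset_def)
    moreover have "1 / norm z > 0" using \<open>1 < norm z\<close> by (cases "z = 0") auto
    ultimately show False using t by linarith
  qed
  thus ?thesis by (simp add: Hf_def)
qed

lemma Hf_scaled_le:
  assumes t: "t > 0"
  shows "ennreal (1 / t^2) * Hf p \<psi> (of_real (1/t) * w) t \<le> K2f p \<psi> w t"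
proof (cases "(of_real (1/t) * w, t) \<in> Sset")
  case False thus ?thesis by (simp add: Hf_def)
next
  case True
  define u where "u = norm w"
  have nz: "norm (of_real (1/t) * w) = u / t" using t by (simp add: norm_mult norm_divide u_def)
  from True have c: "1 < u / t" "1 / (u / t) \<le> t" "t \<le> 1"
    unfolding Sset_def by (simp_all only: mem_Collect_eq fst_conv snd_conv nz)
  have u0: "u > 0" using c(1) t by (metis divide_le_0_iff less_le_not_le zero_less_one norm_ge_zero u_def le_less_trans less_trans)
  have u1: "u \<ge> 1" using c(2) t u0 by (simp add: field_simps)
  have tw: "of_real t * (of_real (1/t) * w) = w" using t by simp
  have "ennreal (1 / t^2) * Hf p \<psi> (of_real (1/t) * w) t = ennreal ((1/t^2) * Gf p \<psi> (of_real (1/t) * w) t)"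
    using True t by (simp add: Hf_def ennreal_mult'[symmetric])
  also have "(1/t^2) * Gf p \<psi> (of_real (1/t) * w) t = (norm (\<psi> w) * fw w) powr p * u powr (2-p) * (1/t^3 * exp (- (1/t^2 - 1) * u^2 / 2))"
    unfolding Gf_def tw nz using scale_identity[OF t u0, of "(norm (\<psi> w) * fw w) powr p" p] by simp
  also have "\<dots> = indicator {1..} (norm w) * (norm (\<psi> w) * fw w) powr p * norm w powr (2 - p) *
        (indicator {0..1} t * (1 / t^3 * exp (- (1 / t^2 - 1) * (norm w)^2 / 2)))"
    using u1 c(3) t by (simp add: u_def)
  finally show ?thesis by (simp add: K2f_def)
qed

lemma step_C:
  assumes p: "p \<ge> 1" and c\<psi>: "continuous_on UNIV \<psi>" and fin: "fint p \<psi> < \<infinity>"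
  shows "(\<integral>\<^sup>+ z. (\<integral>\<^sup>+ t. Hf p \<psi> z t \<partial>lborel) \<partial>lborel) < \<infinity>"
proof -
  have m\<psi>[measurable]: "\<psi> \<in> borel_measurable borel" using c\<psi> borel_measurable_continuous_onI by blast
  have mH: "case_prod (Hf p \<psi>) \<in> borel_measurable (lborel \<Otimes>\<^sub>M lborel)" by (rule meas_H) simp
  have mK: "case_prod (K2f p \<psi>) \<in> borel_measurable (lborel \<Otimes>\<^sub>M lborel)" by (rule meas_K2) simp
  have "(\<integral>\<^sup>+ z. (\<integral>\<^sup>+ t. Hf p \<psi> z t \<partial>lborel) \<partial>lborel) = (\<integral>\<^sup>+ t. (\<integral>\<^sup>+ z. Hf p \<psi> z t \<partial>lborel) \<partial>lborel)"
    using lborel_pair.Fubini'[OF mH] by simp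
  also have "\<dots> \<le> (\<integral>\<^sup>+ t. (\<integral>\<^sup>+ w. K2f p \<psi> w t \<partial>lborel) \<partial>lborel)"
  proof (rule nn_integral_mono)
    fix t :: real assume "t \<in> space lborel"
    show "(\<integral>\<^sup>+ z. Hf p \<psi> z t \<partial>lborel) \<le> (\<integral>\<^sup>+ w. K2f p \<psi> w t \<partial>lborel)"
    proof (cases "t > 0")
      case False
      hence "(\<integral>\<^sup>+ z. Hf p \<psi> z t \<partial>lborel) = 0" by (simp add: Hf_zero)
      thus ?thesis by simp
    next
      case True
      have m1: "(\<lambda>z. Hf p \<psi> z t) \<in> borel_measurable borel"
        using measurable_compose[OF measurable_Pair2'[of t lborel lborel] mH] by simp
      have "(\<integral>\<^sup>+ z. Hf p \<psi> z t \<partial>lborel) = (\<integral>\<^sup>+ w. ennreal (1 / t^2) * Hf p \<psi> (of_real (1/t) * w) t \<partial>lborel)"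
        by (rule nn_integral_scale_complex[OF True m1])
      also have "\<dots> \<le> (\<integral>\<^sup>+ w. K2f p \<psi> w t \<partial>lborel)"
        by (intro nn_integral_mono Hf_scaled_le True)
      finally show ?thesis .
    qed
  qed
  also have "\<dots> = (\<integral>\<^sup>+ w. (\<integral>\<^sup>+ t. K2f p \<psi> w t \<partial>lborel) \<partial>lborel)"
    using lborel_pair.Fubini'[OF mK] by simp
  also have "\<dots> \<le> (\<integral>\<^sup>+ w. ennreal ((norm (\<psi> w) * fw w) powr p) \<partial>lborel)"
  proof (rule nn_integral_mono)
    fix w :: complex assume "w \<in> space lborel"
    define A where "A = indicator {1..} (norm w) * (norm (\<psi> w) * fw w) powr p * norm w powr (2 - p)"
    have A0: "A \<ge> 0" by (simp add: A_def)
    have kn: "indicator {0..1} t * (1 / t^3 * exp (- (1 / t^2 - 1) * (norm w)^2 / 2)) \<ge> 0" for t :: real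
      by (auto simp: indicator_def)
    have "(\<integral>\<^sup>+ t. K2f p \<psi> w t \<partial>lborel) = (\<integral>\<^sup>+ t. ennreal A * ennreal (indicator {0..1} t * (1 / t^3 * exp (- (1 / t^2 - 1) * (norm w)^2 / 2))) \<partial>lborel)"
    proof (intro nn_integral_cong)
      fix t :: real
      have "K2f p \<psi> w t = ennreal (A * (indicator {0..1} t * (1 / t^3 * exp (- (1 / t^2 - 1) * (norm w)^2 / 2))))"
        by (simp add: K2f_def A_def)
      thus "K2f p \<psi> w t = ennreal A * ennreal (indicator {0..1} t * (1 / t^3 * exp (- (1 / t^2 - 1) * (norm w)^2 / 2)))"
        using ennreal_mult[OF A0 kn[of t]] by simp
    qed
    also have "\<dots> = ennreal A * (\<integral>\<^sup>+ t. ennreal (indicator {0..1} t * (1 / t^3 * exp (- (1 / t^2 - 1) * (norm w)^2 / 2))) \<partial>lborel)"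
      by (rule nn_integral_cmult) measurable
    also have "\<dots> \<le> ennreal ((norm (\<psi> w) * fw w) powr p)"
    proof (cases "norm w \<ge> 1")
      case False thus ?thesis by (simp add: A_def)
    next
      case True
      hence w0: "norm w > 0" by (cases "w = 0") auto
      have "ennreal A * (\<integral>\<^sup>+ t. ennreal (indicator {0..1} t * (1 / t^3 * exp (- (1 / t^2 - 1) * (norm w)^2 / 2))) \<partial>lborel)
          = ennreal A * ennreal (1 / (norm w)^2)"
        by (simp only: kint[OF w0])
      also have "\<dots> = ennreal (A * (1 / (norm w)^2))"
        by (rule ennreal_mult[symmetric]) (use A0 in auto)
      also have "\<dots> \<le> ennreal ((norm (\<psi> w) * fw w) powr p)"
      proof (rule ennreal_leI)
        have "A * (1 / (norm w)^2) = (norm (\<psi> w) * fw w) powr p * (norm w powr (2 - p) / (norm w)^2)"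
          using True by (simp add: A_def)
        also have "norm w powr (2 - p) / (norm w)^2 = 1 / norm w powr p"
          using w0 by (simp add: powr_diff powr_numeral)
        also have "(norm (\<psi> w) * fw w) powr p * (1 / norm w powr p) \<le> (norm (\<psi> w) * fw w) powr p"
          using True p ge_one_powr_ge_zero[of "norm w" p] by (intro mult_left_le) (auto simp: divide_le_eq_1)
        finally show "A * (1 / (norm w)^2) \<le> (norm (\<psi> w) * fw w) powr p" .
      qed
      finally show ?thesis .
    qed
    finally show "(\<integral>\<^sup>+ t. K2f p \<psi> w t \<partial>lborel) \<le> ennreal ((norm (\<psi> w) * fw w) powr p)" .
  qed
  also have "\<dots> < \<infinity>" using fin by (simp add: fint_def)
  finally show ?thesis .
qed

lemma fw_le1: "fw z \<le> 1" by (simp add: fw_def)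

lemma fock_primitive:
  assumes holo: "g holomorphic_on UNIV" and p: "p \<ge> 1" and dg: "in_fock p (deriv g)"
  shows "in_fock p g"
proof -
  define \<psi> where "\<psi> = deriv g"
  have h\<psi>: "\<psi> holomorphic_on UNIV" unfolding \<psi>_def using holo by (intro holomorphic_deriv) auto
  have c\<psi>: "continuous_on UNIV \<psi>" using h\<psi> holomorphic_on_imp_continuous_on by blast
  have cg: "continuous_on UNIV g" using holo holomorphic_on_imp_continuous_on by blast
  have fin\<psi>: "fint p \<psi> < \<infinity>" using dg by (simp add: in_fock_iff \<psi>_def)
  have m\<psi>[measurable]: "\<psi> \<in> borel_measurable borel" using c\<psi> borel_measurable_continuous_onI by blast
  have "compact (g ` cball 0 1)"
    by (intro compact_continuous_image continuous_on_subset[OF cg] compact_cball) auto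
  then obtain B where B': "\<forall>x\<in>g ` cball 0 1. norm x \<le> B"
    using compact_imp_bounded bounded_iff by metis
  have B: "norm (g w) \<le> B" if "norm w \<le> 1" for w using B' that by auto
  have B0: "B \<ge> 0" using B[of 0] norm_ge_zero[of "g 0"] by (simp add: order.trans[OF norm_ge_zero])
  have mH: "case_prod (Hf p \<psi>) \<in> borel_measurable (lborel \<Otimes>\<^sub>M lborel)" by (rule meas_H) simp
  have mI: "(\<lambda>z. \<integral>\<^sup>+ t. Hf p \<psi> z t \<partial>lborel) \<in> borel_measurable lborel"
    using lborel.borel_measurable_nn_integral_fst[OF mH] by simp
  have pt: "ennreal ((norm (g z) * fw z) powr p) \<le> ennreal (B powr p) * indicator (cball 0 1) z +
      ennreal (2 powr p) * (ennreal ((B * fw z) powr p) + (\<integral>\<^sup>+ t. Hf p \<psi> z t \<partial>lborel))" for z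
  proof (cases "norm z \<le> 1")
    case True
    have "norm (g z) * fw z \<le> B * 1" using B[OF True] fw_le1[of z] B0 by (intro mult_mono) auto
    hence "(norm (g z) * fw z) powr p \<le> B powr p" using p by (intro powr_mono2) auto
    hence "ennreal ((norm (g z) * fw z) powr p) \<le> ennreal (B powr p) * indicator (cball 0 1) z"
      using True by (simp add: ennreal_leI)
    thus ?thesis by (rule order.trans) simp
  next
    case False
    define r where "r = norm z"
    have r1: "r > 1" using False by (simp add: r_def)
    have t0: "t > 0" if "t \<in> {1/r..1}" for t using that r1 by (auto intro: less_le_trans[of 0 "1/r"])
    have c1: "continuous_on {1/r..1} (\<lambda>t. norm (\<psi> (of_real t * z)) * fw (of_real t * z))"
    proof -
      have a: "continuous_on {1/r..1} (\<lambda>t. of_real t * z)" by (intro continuous_intros)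
      have b1: "continuous_on {1/r..1} (\<lambda>t. \<psi> (of_real t * z))"
        by (rule continuous_on_compose2[OF c\<psi> a]) auto
      have b2: "continuous_on {1/r..1} (\<lambda>t. fw (of_real t * z))"
        by (rule continuous_on_compose2[OF continuous_on_fw a]) auto
      show ?thesis by (intro continuous_on_mult continuous_on_norm b1 b2)
    qed
    have c2: "continuous_on {1/r..1} (\<lambda>t. (norm (\<psi> (of_real t * z)) * fw (of_real t * z)) powr p)"
      by (rule continuous_on_powr'[OF c1 continuous_on_const]) (use p in auto)
    have c3: "continuous_on {1/r..1} (\<lambda>t. t powr (1 - p))"
      by (rule continuous_on_powr'[OF continuous_on_id continuous_on_const]) (use t0 r1 in \<open>auto simp: less_imp_le\<close>)
    have c4: "continuous_on {1/r..1} (\<lambda>t. exp (- (1 - t^2) * (norm z)^2 / 2))"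
      by (intro continuous_intros) auto
    have cG: "continuous_on {1/r..1} (Gf p \<psi> z)"
      unfolding Gf_def by (intro continuous_on_mult c2 c3 c4 continuous_on_const)
    have hi: "(Gf p \<psi> z has_integral integral {1/r..1} (Gf p \<psi> z)) {1/r..1}"
      using integrable_continuous_interval[OF cG] by (simp add: has_integral_integral)
    have "(\<integral>\<^sup>+ t. ennreal (indicator {1/r..1} t * Gf p \<psi> z t) \<partial>lborel) = ennreal (integral {1/r..1} (Gf p \<psi> z))"
      by (rule nn_integral_has_integral_lebesgue[OF _ hi]) (simp add: Gf_nonneg)
    moreover have "Hf p \<psi> z t = ennreal (indicator {1/r..1} t * Gf p \<psi> z t)" for t
      using r1 by (simp add: Hf_def Sset_def indicator_def r_def)
    ultimately have I: "(\<integral>\<^sup>+ t. Hf p \<psi> z t \<partial>lborel) = ennreal (integral {1/r..1} (Gf p \<psi> z))"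
      by simp
    have I0: "integral {1/r..1} (Gf p \<psi> z) \<ge> 0"
      by (intro integral_nonneg integrable_continuous_interval cG Gf_nonneg)
    have "(norm (g z) * fw z) powr p \<le> 2 powr p * ((B * fw z) powr p + integral {1/r..1} (Gf p \<psi> z))"
      using ray_estimate[OF holo p B] r1 by (simp add: r_def \<psi>_def)
    hence "ennreal ((norm (g z) * fw z) powr p) \<le> ennreal (2 powr p) * (ennreal ((B * fw z) powr p) + ennreal (integral {1/r..1} (Gf p \<psi> z)))"
      using I0 by (simp add: ennreal_leI ennreal_mult'[symmetric] ennreal_plus[symmetric] del: ennreal_plus)
    thus ?thesis unfolding I by (rule order.trans) simp
  qed
  have mB: "(\<lambda>z. ennreal ((B * fw z) powr p)) \<in> borel_measurable lborel" by measurable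
  have "fint p g \<le> (\<integral>\<^sup>+ z. ennreal (B powr p) * indicator (cball 0 1) z +
      ennreal (2 powr p) * (ennreal ((B * fw z) powr p) + (\<integral>\<^sup>+ t. Hf p \<psi> z t \<partial>lborel)) \<partial>lborel)"
    unfolding fint_def by (intro nn_integral_mono pt)
  also have "\<dots> = ennreal (B powr p) * emeasure lborel (cball (0::complex) 1) +
      ennreal (2 powr p) * ((\<integral>\<^sup>+ z. ennreal ((B * fw z) powr p) \<partial>lborel) + (\<integral>\<^sup>+ z. (\<integral>\<^sup>+ t. Hf p \<psi> z t \<partial>lborel) \<partial>lborel))"
  proof -
    have ci: "indicator (cball (0::complex) 1) \<in> borel_measurable lborel"
      by (rule borel_measurable_indicator) (simp add: borel_closed)
    have ma: "(\<lambda>z. ennreal (B powr p) * indicator (cball (0::complex) 1) z) \<in> borel_measurable lborel"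
      using ci by (rule borel_measurable_times_ennreal[OF borel_measurable_const])
    have mbd: "(\<lambda>z. ennreal ((B * fw z) powr p) + (\<integral>\<^sup>+ t. Hf p \<psi> z t \<partial>lborel)) \<in> borel_measurable lborel"
      using mB mI by (rule borel_measurable_add)
    have mb: "(\<lambda>z. ennreal (2 powr p) * (ennreal ((B * fw z) powr p) + (\<integral>\<^sup>+ t. Hf p \<psi> z t \<partial>lborel))) \<in> borel_measurable lborel"
      using mbd by (rule borel_measurable_times_ennreal[OF borel_measurable_const])
    show ?thesis
      apply (subst nn_integral_add[OF ma mb])
      apply (subst nn_integral_cmult_indicator, simp)
      apply (subst nn_integral_cmult[OF mbd])
      apply (subst nn_integral_add[OF mB mI])
      apply (rule refl)
      done
  qed
  also have "\<dots> < \<infinity>"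
  proof -
    have e1: "emeasure lborel (cball (0::complex) 1) < \<infinity>" by (intro emeasure_bounded_finite) auto
    have "(\<integral>\<^sup>+ z. ennreal ((B * fw z) powr p) \<partial>lborel) \<le> (\<integral>\<^sup>+ z. ennreal (B powr p) * ennreal (exp (- (norm (z::complex))\<^sup>2 / 2)) \<partial>lborel)"
    proof (rule nn_integral_mono)
      fix z :: complex assume "z \<in> space lborel"
      have "fw z powr p = exp (- ((norm z) ^ 2) / 2 * p)" by (simp add: fw_def exp_powr_real)
      also have "\<dots> \<le> exp (- (norm z)\<^sup>2 / 2)" using p mult_left_mono[of 1 p "(norm z)^2"] by simp
      finally have "(B * fw z) powr p \<le> B powr p * exp (- (norm z)\<^sup>2 / 2)"
        using B0 by (simp add: powr_mult mult_left_mono)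
      thus "ennreal ((B * fw z) powr p) \<le> ennreal (B powr p) * ennreal (exp (- (norm z)\<^sup>2 / 2))"
        by (simp add: ennreal_mult'[symmetric] ennreal_leI)
    qed
    also have "\<dots> = ennreal (B powr p) * (\<integral>\<^sup>+ z. ennreal (exp (- (norm (z::complex))\<^sup>2 / 2)) \<partial>lborel)"
      by (rule nn_integral_cmult) measurable
    also have "\<dots> < \<infinity>" using gauss_complex_finite by (simp add: ennreal_mult_less_top)
    finally have e2: "(\<integral>\<^sup>+ z. ennreal ((B * fw z) powr p) \<partial>lborel) < \<infinity>" .
    have e3: "(\<integral>\<^sup>+ z. (\<integral>\<^sup>+ t. Hf p \<psi> z t \<partial>lborel) \<partial>lborel) < \<infinity>"
      by (rule step_C[OF p c\<psi> fin\<psi>])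
    show ?thesis using e1 e2 e3 by (simp add: ennreal_mult_less_top)
  qed
  finally show ?thesis using holo by (simp add: in_fock_iff)
qed

lemma holo_diff_at: "f holomorphic_on UNIV \<Longrightarrow> f field_differentiable at z"
  by (rule holomorphic_on_imp_differentiable_at) auto

lemma fock_first_order:
  assumes holo: "g holomorphic_on UNIV" and p: "p \<ge> 1"
    and h: "in_fock p (\<lambda>z. deriv g z - l * g z)"
  shows "in_fock p g"
proof -
  define a where "a = - cnj l"
  have ca: "cnj a = - l" by (simp add: a_def)
  define \<psi> where "\<psi> = (\<lambda>z. deriv g z - l * g z)"
  have h\<psi>: "\<psi> holomorphic_on UNIV" unfolding \<psi>_def using holo
    by (intro holomorphic_intros holomorphic_deriv) auto
  define G where "G = (\<lambda>z. g (z - a) * exp (cnj a * z))"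
  have hG: "G holomorphic_on UNIV" unfolding G_def using holo
    by (intro holomorphic_intros holomorphic_on_compose_gen[where g=g and f="\<lambda>z. z - a" and t=UNIV, unfolded o_def]) auto
  have dG: "deriv G = (\<lambda>z. \<psi> (z - a) * exp (cnj a * z))"
  proof
    fix z
    have "(G has_field_derivative (deriv g (z - a) * exp (cnj a * z) + g (z - a) * (exp (cnj a * z) * cnj a))) (at z)"
      unfolding G_def using holo
      by (auto intro!: derivative_eq_intros DERIV_chain2[where f=g] holomorphic_derivI[of g UNIV, where T=UNIV, simplified])
    hence "deriv G z = deriv g (z - a) * exp (cnj a * z) + g (z - a) * (exp (cnj a * z) * cnj a)"
      by (rule DERIV_imp_deriv)
    also have "\<dots> = \<psi> (z - a) * exp (cnj a * z)" unfolding \<psi>_def ca by (simp add: algebra_simps)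
    finally show "deriv G z = \<psi> (z - a) * exp (cnj a * z)" .
  qed
  have "in_fock p (deriv G)"
    unfolding dG using h in_fock_translate_iff[OF h\<psi>, of p a] p by (simp add: \<psi>_def)
  hence "in_fock p G" by (rule fock_primitive[OF hG p])
  thus ?thesis using in_fock_translate_iff[OF holo, of p a] p by (simp add: G_def)
qed

lemma holo_iter: "f holomorphic_on UNIV \<Longrightarrow> (deriv ^^ n) f holomorphic_on UNIV"
  by (induction n) (auto intro: holomorphic_deriv)

lemma deriv_lin:
  assumes "a holomorphic_on UNIV" "b holomorphic_on UNIV"
  shows "deriv (\<lambda>z. a z + c * b z) = (\<lambda>z. deriv a z + c * deriv b z)"
proof
  fix z
  have "a field_differentiable at z" "b field_differentiable at z" using assms holo_diff_at by auto
  thus "deriv (\<lambda>z. a z + c * b z) z = deriv a z + c * deriv b z"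
    by (simp add: field_differentiable_mult field_differentiable_const)
qed

lemma iter_lin:
  assumes "a holomorphic_on UNIV" "b holomorphic_on UNIV"
  shows "(deriv ^^ n) (\<lambda>z. a z + c * b z) = (\<lambda>z. (deriv ^^ n) a z + c * (deriv ^^ n) b z)"
proof (induction n)
  case 0 thus ?case by simp
next
  case (Suc n)
  have "(deriv ^^ Suc n) (\<lambda>z. a z + c * b z) = deriv ((deriv ^^ n) (\<lambda>z. a z + c * b z))" by simp
  also have "\<dots> = deriv (\<lambda>z. (deriv ^^ n) a z + c * (deriv ^^ n) b z)" by (simp only: Suc)
  also have "\<dots> = (\<lambda>z. deriv ((deriv ^^ n) a) z + c * deriv ((deriv ^^ n) b) z)"
    by (rule deriv_lin) (use assms holo_iter in auto)
  finally show ?case by simp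
qed

primrec opN :: "(nat \<Rightarrow> complex) \<Rightarrow> nat \<Rightarrow> (complex \<Rightarrow> complex) \<Rightarrow> complex \<Rightarrow> complex" where
  "opN rt 0 g = g"
| "opN rt (Suc n) g = (\<lambda>z. deriv (opN rt n g) z - rt n * opN rt n g z)"

lemma opN_holo: "g holomorphic_on UNIV \<Longrightarrow> opN rt n g holomorphic_on UNIV"
  by (induction n) (auto intro!: holomorphic_intros holomorphic_deriv)

lemma opN_fock:
  assumes "g holomorphic_on UNIV" "p \<ge> 1" "in_fock p (opN rt n g)"
  shows "in_fock p g"
  using assms(3)
proof (induction n)
  case 0 thus ?case by simp
next
  case (Suc n)
  have "in_fock p (opN rt n g)"
    using fock_first_order[OF opN_holo[OF assms(1)] assms(2)] Suc.prems by simp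
  thus ?case by (rule Suc.IH)
qed

lemma degree_lin_prod: "degree (\<Prod>i<n. [:- rt i, 1:] :: complex poly) \<le> n"
proof (induction n)
  case 0 thus ?case by simp
next
  case (Suc n)
  have "degree ((\<Prod>i<n. [:- rt i, 1:]) * [:- rt n, 1:] :: complex poly) \<le> degree (\<Prod>i<n. [:- rt i, 1:] :: complex poly) + degree [:- rt n, 1 :: complex:]"
    by (rule degree_mult_le)
  also have "\<dots> \<le> Suc n" using Suc by simp
  finally show ?case by simp
qed

lemma coeff_lin_mult:
  "coeff (Q * [:- a, 1:]) j = (if j = 0 then 0 else coeff Q (j - 1)) - a * coeff (Q :: complex poly) j"
proof -
  have "Q * [:- a, 1:] = smult (- a) Q + pCons 0 Q"
    by (simp add: mult.commute[of Q] mult_pCons_left)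
  thus ?thesis by (cases j) simp_all
qed

lemma opN_poly:
  assumes holo: "g holomorphic_on UNIV"
  shows "opN rt n g = (\<lambda>z. \<Sum>j\<le>n. coeff (\<Prod>i<n. [:- rt i, 1:]) j * (deriv ^^ j) g z)"
proof (induction n)
  case 0 thus ?case by simp
next
  case (Suc n)
  define Q where "Q = (\<Prod>i<n. [:- rt i, 1:] :: complex poly)"
  have dQ: "coeff Q (Suc n) = 0" unfolding Q_def using degree_lin_prod[where n=n and rt=rt] by (intro coeff_eq_0) simp
  have hd: "(deriv ^^ j) g field_differentiable at z" for j z
    using holo_iter[OF holo] holo_diff_at by blast
  show ?case
  proof
    fix z
    have "opN rt (Suc n) g z = deriv (\<lambda>z. \<Sum>j\<le>n. coeff Q j * (deriv ^^ j) g z) z - rt n * (\<Sum>j\<le>n. coeff Q j * (deriv ^^ j) g z)"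
      using Suc by (simp add: Q_def)
    also have "deriv (\<lambda>z. \<Sum>j\<le>n. coeff Q j * (deriv ^^ j) g z) z = (\<Sum>j\<le>n. coeff Q j * (deriv ^^ Suc j) g z)"
      using hd by (simp add: field_differentiable_mult field_differentiable_const)
    also have "(\<Sum>j\<le>n. coeff Q j * (deriv ^^ Suc j) g z) - rt n * (\<Sum>j\<le>n. coeff Q j * (deriv ^^ j) g z)
        = (\<Sum>j\<le>Suc n. coeff (Q * [:- rt n, 1:]) j * (deriv ^^ j) g z)"
    proof -
      have "(\<Sum>j\<le>Suc n. coeff (Q * [:- rt n, 1:]) j * (deriv ^^ j) g z)
          = (\<Sum>j\<le>Suc n. (if j = 0 then 0 else coeff Q (j - 1)) * (deriv ^^ j) g z) - rt n * (\<Sum>j\<le>Suc n. coeff Q j * (deriv ^^ j) g z)"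
      proof -
        have "(\<Sum>j\<le>Suc n. coeff (Q * [:- rt n, 1:]) j * (deriv ^^ j) g z)
           = (\<Sum>j\<le>Suc n. (if j = 0 then 0 else coeff Q (j - 1)) * (deriv ^^ j) g z - rt n * (coeff Q j * (deriv ^^ j) g z))"
          by (rule sum.cong[OF refl]) (simp only: coeff_lin_mult left_diff_distrib mult.assoc)
        thus ?thesis by (simp only: sum_subtractf sum_distrib_left)
      qed
      also have "(\<Sum>j\<le>Suc n. (if j = 0 then 0 else coeff Q (j - 1)) * (deriv ^^ j) g z) = (\<Sum>j\<le>n. coeff Q j * (deriv ^^ Suc j) g z)"
        by (subst sum.atMost_Suc_shift) simp
      also have "(\<Sum>j\<le>Suc n. coeff Q j * (deriv ^^ j) g z) = (\<Sum>j\<le>n. coeff Q j * (deriv ^^ j) g z)"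
        using dQ by simp
      finally show ?thesis by simp
    qed
    finally show "opN rt (Suc n) g z = (\<Sum>j\<le>Suc n. coeff (\<Prod>i<Suc n. [:- rt i, 1:]) j * (deriv ^^ j) g z)"
      by (simp add: Q_def)
  qed
qed

lemma roots_exist:
  assumes k: "k \<ge> 1"
  obtains rt where "(\<Prod>i<k. [:- rt i, 1:]) = monom 1 k + [:c :: complex:]"
proof -
  define P where "P = monom (1::complex) k + [:c:]"
  have dP: "degree P = k"
    unfolding P_def using k by (subst degree_add_eq_left) (auto simp: degree_monom_eq)
  have lP: "lead_coeff P = 1" using k by (simp add: dP) (cases k, auto simp: P_def)
  obtain rt where "smult (lead_coeff P) (\<Prod>i<degree P. [:- rt i, 1:]) = P"
    by (rule complex_poly_decompose')
  thus ?thesis using lP dP that[of rt] by (simp add: P_def)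
qed

lemma opN_const_coeff:
  assumes k: "k \<ge> 1" and holo: "g holomorphic_on UNIV"
    and rt: "(\<Prod>i<k. [:- rt i, 1:]) = monom 1 k + [:c :: complex:]"
  shows "opN rt k g = (\<lambda>z. (deriv ^^ k) g z + c * g z)"
proof
  fix z
  have "opN rt k g z = (\<Sum>j\<le>k. coeff (monom 1 k + [:c:]) j * (deriv ^^ j) g z)"
    using opN_poly[OF holo, of rt k] rt by simp
  also have "\<dots> = (\<Sum>j\<le>k. (if j = k then (deriv ^^ j) g z else 0) + (if j = 0 then c * (deriv ^^ j) g z else 0))"
    using k by (intro sum.cong refl) (auto simp: coeff_monom coeff_pCons split: nat.splits)
  also have "\<dots> = (deriv ^^ k) g z + c * g z"
    by (simp add: sum.distrib)
  finally show "opN rt k g z = (deriv ^^ k) g z + c * g z" .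
qed

lemma iter_cmult:
  assumes "b holomorphic_on UNIV"
  shows "(deriv ^^ n) (\<lambda>z. c * b z) = (\<lambda>z. c * (deriv ^^ n) b z)"
proof (induction n)
  case 0 thus ?case by simp
next
  case (Suc n)
  show ?case
  proof
    fix z
    have "(deriv ^^ n) b field_differentiable at z" using holo_iter[OF assms] holo_diff_at by blast
    thus "(deriv ^^ Suc n) (\<lambda>z. c * b z) z = c * (deriv ^^ Suc n) b z"
      using Suc by simp
  qed
qed

lemma iter_comm: "(deriv ^^ a) ((deriv ^^ b) f) = (deriv ^^ b) ((deriv ^^ a) f)"
proof -
  have "(deriv ^^ a) ((deriv ^^ b) f) = (deriv ^^ (a + b)) f" by (simp add: funpow_add)
  also have "\<dots> = (deriv ^^ (b + a)) f" by (simp add: add.commute)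
  also have "\<dots> = (deriv ^^ b) ((deriv ^^ a) f)" by (simp add: funpow_add)
  finally show ?thesis .
qed

lemma const_coeff_case:
  assumes k: "k \<ge> 1" and p: "p \<ge> 1"
    and h\<phi>: "\<phi> holomorphic_on UNIV" and \<phi>s: "in_fock_sobolev p k \<phi>"
    and hf: "f holomorphic_on UNIV"
    and eq: "\<And>z. (deriv ^^ k) f z + c * f z = (deriv ^^ k) \<phi> z"
  shows "in_fock_sobolev p k f"
proof -
  obtain rt where rt: "(\<Prod>i<k. [:- rt i, 1:]) = monom 1 k + [:c :: complex:]"
    using roots_exist[OF k] by blast
  define u where "u = (\<lambda>z. f z + (-1) * \<phi> z)"
  have hu: "u holomorphic_on UNIV" unfolding u_def using hf h\<phi> by (intro holomorphic_intros)
  have Du: "(deriv ^^ n) u = (\<lambda>z. (deriv ^^ n) f z + (-1) * (deriv ^^ n) \<phi> z)" for n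
    unfolding u_def by (rule iter_lin[OF hf h\<phi>])
  have equ: "(\<lambda>z. (deriv ^^ k) u z + c * u z) = (\<lambda>z. (- c) * \<phi> z)"
  proof
    fix z show "(deriv ^^ k) u z + c * u z = (- c) * \<phi> z"
      using eq[of z] unfolding Du by (simp add: u_def algebra_simps)
  qed
  have "in_fock p ((deriv ^^ \<alpha>) f)" if a: "\<alpha> \<le> k" for \<alpha>
  proof -
    define v where "v = (deriv ^^ \<alpha>) u"
    have hv: "v holomorphic_on UNIV" unfolding v_def by (rule holo_iter[OF hu])
    have "opN rt k v = (\<lambda>z. (deriv ^^ k) v z + c * v z)"
      by (rule opN_const_coeff[OF k hv rt])
    also have "\<dots> = (deriv ^^ \<alpha>) (\<lambda>z. (deriv ^^ k) u z + c * u z)"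
      unfolding v_def iter_lin[OF holo_iter[OF hu] hu] iter_comm[of \<alpha> k] ..
    also have "\<dots> = (\<lambda>z. (- c) * (deriv ^^ \<alpha>) \<phi> z)"
      unfolding equ by (rule iter_cmult[OF h\<phi>])
    finally have op: "opN rt k v = (\<lambda>z. (- c) * (deriv ^^ \<alpha>) \<phi> z)" .
    have "in_fock p ((deriv ^^ \<alpha>) \<phi>)" using \<phi>s a by (simp add: in_fock_sobolev_def)
    hence "in_fock p (opN rt k v)" unfolding op using p by (intro in_fock_cmult) auto
    hence fv: "in_fock p v" by (rule opN_fock[OF hv p])
    have "in_fock p (\<lambda>z. v z + (deriv ^^ \<alpha>) \<phi> z)"
      by (rule in_fock_add[OF p fv]) fact
    moreover have "(\<lambda>z. v z + (deriv ^^ \<alpha>) \<phi> z) = (deriv ^^ \<alpha>) f"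
      unfolding v_def Du by simp
    ultimately show ?thesis by simp
  qed
  thus ?thesis using hf by (simp add: in_fock_sobolev_def)
qed

lemma ereal_sum_term_le:
  fixes f :: "nat \<Rightarrow> ereal"
  assumes "finite S" "a \<in> S" "\<And>i. i \<in> S \<Longrightarrow> f i \<ge> 0"
  shows "f a \<le> sum f S"
proof -
  have "sum f S = f a + sum f (S - {a})" using assms by (simp add: sum.remove)
  moreover have "sum f (S - {a}) \<ge> 0" using assms by (intro sum_nonneg) auto
  ultimately show ?thesis by (simp add: add_increasing2)
qed

lemma inv_tendsto_0: "((\<lambda>z::complex. 1 / (1 + norm z)) \<longlongrightarrow> 0) at_infinity"
proof -
  have "filterlim (\<lambda>z::complex. norm z) at_top at_infinity"
    using filterlim_at_infinity_imp_norm_at_top[OF filterlim_ident] by simp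
  hence "filterlim (\<lambda>z::complex. 1 + norm z) at_top at_infinity"
    by (rule filterlim_tendsto_add_at_top[OF tendsto_const])
  from tendsto_inverse_0_at_top[OF this] show ?thesis by (simp add: inverse_eq_divide)
qed

lemma main_impl:
  assumes k: "k \<ge> 1" and p: "p \<ge> 1" and hA: "\<forall>j\<le>k. A j holomorphic_on UNIV"
    and hs: "(\<Sum>i\<le>k. ereal 1 *
          (\<Sum>j<k. (SUP z. ereal (norm (A j z) / (1 + norm z) powr (real k - real i - real j)))
                   * ereal 1)) < 1"
    and h\<phi>: "\<exists>\<phi>. \<phi> holomorphic_on UNIV \<and> (deriv ^^ k) \<phi> = A k \<and> in_fock_sobolev p k \<phi>"
    and hf: "f holomorphic_on UNIV"
    and heq: "\<forall>z. (deriv ^^ k) f z + (\<Sum>j<k. A j z * (deriv ^^ j) f z) = A k z"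
  shows "in_fock_sobolev p k f"
proof -
  define S where "S i j = (SUP z. ereal (norm (A j z) / (1 + norm z) powr (real k - real i - real j)))" for i j
  have S0: "S i j \<ge> 0" for i j
    unfolding S_def by (rule SUP_upper2[of 0]) auto
  have hs': "(\<Sum>i\<le>k. (\<Sum>j<k. S i j)) < 1" using hs by (simp add: S_def)
  have "(\<Sum>j<k. S k j) \<le> (\<Sum>i\<le>k. (\<Sum>j<k. S i j))"
    by (rule ereal_sum_term_le[where f="\<lambda>i. \<Sum>j<k. S i j"]) (auto intro: sum_nonneg S0)
  hence Sk: "(\<Sum>j<k. S k j) < 1" using hs' by simp
  have Sj: "S k j < 1" if "j < k" for j
  proof -
    have "S k j \<le> (\<Sum>j<k. S k j)" by (rule ereal_sum_term_le[where f="S k"]) (use that S0 in auto)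
    thus ?thesis using Sk by simp
  qed
  have bnd: "norm (A j z) < (1 + norm z) powr (- real j)" if "j < k" for j z
  proof -
    have "ereal (norm (A j z) / (1 + norm z) powr (real k - real k - real j)) \<le> S k j"
      unfolding S_def by (rule SUP_upper) simp
    hence le: "ereal (norm (A j z) / (1 + norm z) powr (- real j)) \<le> S k j" by simp
    have "ereal (norm (A j z) / (1 + norm z) powr (- real j)) < 1"
      by (rule order.strict_trans1[OF le Sj[OF that]])
    hence "norm (A j z) / (1 + norm z) powr (- real j) < 1" by (simp add: one_ereal_def)
    moreover have "(1 + norm z) powr (- real j) > 0" using add_pos_nonneg[OF zero_less_one norm_ge_zero[of z]] by simp
    ultimately show ?thesis by (simp add: divide_less_eq)
  qed
  have A0: "A j = (\<lambda>_. 0)" if "1 \<le> j" "j < k" for j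
  proof
    fix z
    have hj: "A j holomorphic_on UNIV" using hA that by auto
    have le: "norm (A j w) \<le> 1 / (1 + norm w)" for w
    proof -
      have "norm (A j w) \<le> (1 + norm w) powr (- real j)" using bnd[OF that(2)] by (simp add: less_imp_le)
      also have "\<dots> \<le> (1 + norm w) powr (- 1)" using that by (intro powr_mono) auto
      also have "\<dots> = 1 / (1 + norm w)" by (simp add: powr_minus_divide)
      finally show ?thesis .
    qed
    have "(A j \<longlongrightarrow> 0) at_infinity"
      by (rule Lim_null_comparison[OF always_eventually inv_tendsto_0]) (use le in auto)
    thus "A j z = 0" by (rule Liouville_weak_0[OF hj])
  qed
  define c where "c = A 0 0"
  have Ac: "A 0 z = c" for z
  proof -
    have h0: "A 0 holomorphic_on UNIV" using hA by auto
    have "norm (A 0 w) \<le> 1" for w using bnd[of 0 w] k add_pos_nonneg[OF zero_less_one norm_ge_zero[of w]] by (simp split: if_splits)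
    hence "bounded (range (A 0))" by (auto simp: bounded_iff)
    hence "A 0 constant_on UNIV" by (rule Liouville_theorem[OF h0])
    thus ?thesis unfolding c_def constant_on_def by auto
  qed
  obtain \<phi> where h\<phi>1: "\<phi> holomorphic_on UNIV" and h\<phi>2: "(deriv ^^ k) \<phi> = A k" and h\<phi>3: "in_fock_sobolev p k \<phi>"
    using h\<phi> by blast
  have eq: "(deriv ^^ k) f z + c * f z = (deriv ^^ k) \<phi> z" for z
  proof -
    have "(\<Sum>j<k. A j z * (deriv ^^ j) f z) = (\<Sum>j<k. (if j = 0 then c * f z else 0))"
    proof (rule sum.cong[OF refl])
      fix j assume "j \<in> {..<k}"
      thus "A j z * (deriv ^^ j) f z = (if j = 0 then c * f z else 0)"
        using A0[of j] Ac[of z] by (cases "j = 0") auto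
    qed
    also have "\<dots> = c * f z" using k by simp
    finally show ?thesis using heq h\<phi>2 by metis
  qed
  show ?thesis by (rule const_coeff_case[OF k p h\<phi>1 h\<phi>3 hf eq])
qed

theorem theorem1p2:
  fixes p :: real and k :: nat
  assumes "k \<ge> 1" and "p \<ge> 1"
  shows "\<exists>C E :: nat \<Rightarrow> real. (\<forall>i\<le>k. C i > 0) \<and> (\<forall>j<k. E j > 0) \<and>
    (\<forall>(A :: nat \<Rightarrow> complex \<Rightarrow> complex) (f :: complex \<Rightarrow> complex).
       (\<forall>j\<le>k. A j holomorphic_on UNIV) \<longrightarrow>
       (\<Sum>i\<le>k. ereal (C i) *
          (\<Sum>j<k. (SUP z. ereal (norm (A j z) / (1 + norm z) powr (real k - real i - real j)))
                   * ereal (E j))) < 1 \<longrightarrow>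
       (\<exists>\<phi>. \<phi> holomorphic_on UNIV \<and> (deriv ^^ k) \<phi> = A k \<and> in_fock_sobolev p k \<phi>) \<longrightarrow>
       f holomorphic_on UNIV \<longrightarrow>
       (\<forall>z. (deriv ^^ k) f z + (\<Sum>j<k. A j z * (deriv ^^ j) f z) = A k z) \<longrightarrow>
       in_fock_sobolev p k f)"
  apply (rule exI[of _ "\<lambda>_. 1"], rule exI[of _ "\<lambda>_. 1"])
  using main_impl[OF assms] by auto


end
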